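(* The set $\mathcal{A}_N^C$ is star-shaped with respect to the flat matrix $T_*=\frac1N\sum_{k=0}^{N-1}X^k$: for every $T\in\mathcal{A}_N^C$ and every $m\in(0,1]$, $mT+(1-m)T_*\in\mathcal{A}_N^C$.
   Context: $X$ is the $N\times N$ cyclic shift $X|j\rangle=|j\oplus1\rangle$ (addition mod $N$), $\mathcal{K}_k=X^k-\mathbb{I}_N$, and $\mathcal{A}_N^C$ is the set of matrices $\exp(\sum_{k=1}^{N-1}t_k\mathcal{K}_k)$ with all $t_k\ge0$. *)

theory Defs
  imports "HOL-Analysis.Analysis"
begin

text \<open>N x N real matrices are represented as functions nat => nat => real,
  with indices ranging over {0..<N}; entries outside are irrelevant and kept 0.\<close>

type_synonym rmat = "nat \<Rightarrow> nat \<Rightarrow> real"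

definition mmult :: "nat \<Rightarrow> rmat \<Rightarrow> rmat \<Rightarrow> rmat" where
  "mmult N A B = (\<lambda>i j. \<Sum>l<N. A i l * B l j)"

definition mid :: "nat \<Rightarrow> rmat" where
  "mid N = (\<lambda>i j. if i < N \<and> j < N \<and> i = j then 1 else 0)"

fun mpow :: "nat \<Rightarrow> rmat \<Rightarrow> nat \<Rightarrow> rmat" where
  "mpow N A 0 = mid N"
| "mpow N A (Suc k) = mmult N A (mpow N A k)"

definition mexp :: "nat \<Rightarrow> rmat \<Rightarrow> rmat" where
  "mexp N A = (\<lambda>i j. \<Sum>k. mpow N A k i j / fact k)"

definition shiftX :: "nat \<Rightarrow> rmat" where
  "shiftX N = (\<lambda>i j. if i < N \<and> j < N \<and> i = (j + 1) mod N then 1 else 0)"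

definition Kgen :: "nat \<Rightarrow> nat \<Rightarrow> rmat" where
  "Kgen N k = (\<lambda>i j. mpow N (shiftX N) k i j - mid N i j)"

definition AC :: "nat \<Rightarrow> rmat set" where
  "AC N = {mexp N (\<lambda>i j. \<Sum>k\<in>{1..N-1}. t k * Kgen N k i j) | t.
              \<forall>k\<in>{1..N-1}. t k \<ge> 0}"

definition Tflat :: "nat \<Rightarrow> rmat" where
  "Tflat N = (\<lambda>i j. (1 / real N) * (\<Sum>k<N. mpow N (shiftX N) k i j))"

end

theory Submission imports Defs begin


definition good :: "nat \<Rightarrow> rmat \<Rightarrow> bool" where
  "good N A \<longleftrightarrow> (\<forall>i j. \<not> (i < N \<and> j < N) \<longrightarrow> A i j = 0)"

lemma good_mid: "good N (mid N)" by (simp add: good_def mid_def)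

lemma good_mmult: "good N A \<Longrightarrow> good N B \<Longrightarrow> good N (mmult N A B)"
  by (auto simp: good_def mmult_def)

lemma good_mpow: "good N A \<Longrightarrow> good N (mpow N A k)"
  by (induction k) (auto simp: good_mid good_mmult)

lemma mmult_mid_left: "good N B \<Longrightarrow> mmult N (mid N) B = B"
proof (intro ext)
  fix i j assume g: "good N B"
  show "mmult N (mid N) B i j = B i j"
  proof (cases "i < N")
    case True
    have "mmult N (mid N) B i j = (\<Sum>l<N. if l = i then B i j else 0)"
      unfolding mmult_def mid_def by (rule sum.cong) (auto simp: True)
    also have "\<dots> = B i j" using True by simp
    finally show ?thesis .
  next
    case False then show ?thesis using g by (auto simp: mmult_def mid_def good_def)
  qed
qed

lemma mmult_mid_right: "good N B \<Longrightarrow> mmult N B (mid N) = B"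
proof (intro ext)
  fix i j assume g: "good N B"
  show "mmult N B (mid N) i j = B i j"
  proof (cases "j < N")
    case True
    have "mmult N B (mid N) i j = (\<Sum>l<N. if l = j then B i j else 0)"
      unfolding mmult_def mid_def by (rule sum.cong) (auto simp: True)
    also have "\<dots> = B i j" using True by simp
    finally show ?thesis .
  next
    case False then show ?thesis using g by (auto simp: mmult_def mid_def good_def)
  qed
qed

lemma mmult_assoc: "mmult N (mmult N A B) C = mmult N A (mmult N B C)"
proof (intro ext)
  fix i j
  have "mmult N (mmult N A B) C i j = (\<Sum>l<N. \<Sum>m<N. A i m * B m l * C l j)"
    by (simp add: mmult_def sum_distrib_right)
  also have "\<dots> = (\<Sum>m<N. \<Sum>l<N. A i m * B m l * C l j)" by (rule sum.swap)
  also have "\<dots> = mmult N A (mmult N B C) i j"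
    by (simp add: mmult_def sum_distrib_left mult.assoc)
  finally show "mmult N (mmult N A B) C i j = mmult N A (mmult N B C) i j" .
qed

lemma mmult_add_left: "mmult N (\<lambda>i j. A i j + B i j) C = (\<lambda>i j. mmult N A C i j + mmult N B C i j)"
  by (simp add: mmult_def algebra_simps sum.distrib)

lemma mmult_add_right: "mmult N A (\<lambda>i j. B i j + C i j) = (\<lambda>i j. mmult N A B i j + mmult N A C i j)"
  by (simp add: mmult_def algebra_simps sum.distrib)

lemma mmult_scale_left: "mmult N (\<lambda>i j. c * A i j) C = (\<lambda>i j. c * mmult N A C i j)"
  by (simp add: mmult_def algebra_simps sum_distrib_left)

lemma mmult_scale_right: "mmult N A (\<lambda>i j. c * C i j) = (\<lambda>i j. c * mmult N A C i j)"
  by (simp add: mmult_def algebra_simps sum_distrib_left)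

lemma mmult_sum_right: "mmult N A (\<lambda>i j. \<Sum>k\<in>S. f k * M k i j) = (\<lambda>i j. \<Sum>k\<in>S. f k * mmult N A (M k) i j)"
proof (intro ext)
  fix i j
  show "mmult N A (\<lambda>i j. \<Sum>k\<in>S. f k * M k i j) i j = (\<Sum>k\<in>S. f k * mmult N A (M k) i j)"
    unfolding mmult_def sum_distrib_left
    by (subst sum.swap) (simp add: algebra_simps)
qed

lemma mod_lt2: "(N::nat) > 0 \<Longrightarrow> (x::nat) < 2 * N \<Longrightarrow> x mod N = (if x < N then x else x - N)"
  by (simp add: le_mod_geq)

lemma unique_mod:
  fixes a N i :: nat
  assumes "a < N" "i < N"
  shows "(\<Sum>l<N. if i = (a + l) mod N then 1 else (0::real)) = 1"
proof -
  have N: "N > 0" using assms by simp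
  let ?l0 = "(i + N - a) mod N"
  have "\<And>l. l < N \<Longrightarrow> (i = (a + l) mod N) = (l = ?l0)"
  proof -
    fix l assume l: "l < N"
    have e1: "(a + l) mod N = (if a + l < N then a + l else a + l - N)"
      using mod_lt2[OF N, of "a+l"] assms l by simp
    have e2: "?l0 = (if i + N - a < N then i + N - a else i + N - a - N)"
      using mod_lt2[OF N, of "i+N-a"] assms by simp
    show "(i = (a + l) mod N) = (l = ?l0)" unfolding e1 e2 using assms l by auto
  qed
  then have "(\<Sum>l<N. if i = (a + l) mod N then 1 else (0::real)) = (\<Sum>l<N. if l = ?l0 then 1 else 0)"
    by (intro sum.cong) auto
  also have "\<dots> = 1" using N by simp
  finally show ?thesis .
qed

lemma mpow_shift: "mpow N (shiftX N) k i j = (if i < N \<and> j < N \<and> i = (j + k) mod N then 1 else 0)"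
proof (induction k arbitrary: i j)
  case 0
  then show ?case by (auto simp: mid_def)
next
  case (Suc k)
  have "mpow N (shiftX N) (Suc k) i j =
     (\<Sum>l<N. if l = (j + k) mod N then (if i < N \<and> j < N \<and> i = (l + 1) mod N then 1 else 0) else 0)"
    unfolding mpow.simps mmult_def Suc.IH
    by (intro sum.cong) (auto simp: shiftX_def)
  also have "\<dots> = (if i < N \<and> j < N \<and> i = ((j + k) mod N + 1) mod N then 1 else 0)"
    by (cases "N = 0") auto
  also have "((j + k) mod N + 1) mod N = (j + Suc k) mod N"
    by (simp add: mod_Suc_eq)
  finally show ?case .
qed

lemma Tflat_eq: "Tflat N = (\<lambda>i j. if i < N \<and> j < N then 1 / real N else 0)"
proof (intro ext)
  fix i j
  show "Tflat N i j = (if i < N \<and> j < N then 1 / real N else 0)"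
  proof (cases "i < N \<and> j < N")
    case True
    have "(\<Sum>k<N. mpow N (shiftX N) k i j) = (\<Sum>k<N. if i = (j + k) mod N then 1 else 0)"
      using True by (simp add: mpow_shift)
    also have "\<dots> = 1" using unique_mod True by blast
    finally show ?thesis using True by (simp add: Tflat_def)
  next
    case False then show ?thesis by (auto simp: Tflat_def mpow_shift)
  qed
qed

lemma good_Kgen: "good N (Kgen N k)"
  by (simp add: good_def Kgen_def mpow_shift mid_def)

lemma Kgen_rowsum: "k < N \<Longrightarrow> i < N \<Longrightarrow> (\<Sum>l<N. Kgen N k i l) = 0"
proof -
  assume k: "k < N" and i: "i < N"
  have "(\<Sum>l<N. Kgen N k i l) = (\<Sum>l<N. if i = (k + l) mod N then 1 else 0) - (\<Sum>l<N. mid N i l)"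
    unfolding Kgen_def sum_subtractf using i by (simp add: mpow_shift add.commute)
  also have "(\<Sum>l<N. mid N i l) = (\<Sum>l<N. if l = i then 1 else 0)"
    by (intro sum.cong) (auto simp: mid_def i)
  finally show ?thesis using unique_mod[OF k i] i by simp
qed

lemma Kgen_colsum: "k < N \<Longrightarrow> j < N \<Longrightarrow> (\<Sum>l<N. Kgen N k l j) = 0"
proof -
  assume k: "k < N" and j: "j < N"
  have "(\<Sum>l<N. Kgen N k l j) = (\<Sum>l<N. if l = (j + k) mod N then 1 else 0) - (\<Sum>l<N. mid N l j)"
    unfolding Kgen_def sum_subtractf using j by (intro arg_cong2[where f=minus] sum.cong) (auto simp: mpow_shift)
  also have "(\<Sum>l<N. mid N l j) = (\<Sum>l<N. if l = j then 1 else 0)"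
    by (intro sum.cong) (auto simp: mid_def j)
  finally show ?thesis using j by simp
qed


lemma binom_step:
  fixes f :: "nat \<Rightarrow> real"
  shows "(\<Sum>k\<le>n. of_nat (n choose k) * c^(n-k) * f (Suc k)) + c * (\<Sum>k\<le>n. of_nat (n choose k) * c^(n-k) * f k)
       = (\<Sum>k\<le>Suc n. of_nat (Suc n choose k) * c^(Suc n-k) * f k)"
proof -
  have R: "(\<Sum>k\<le>Suc n. of_nat (Suc n choose k) * c^(Suc n-k) * f k)
     = c^(Suc n) * f 0 + (\<Sum>k\<le>n. of_nat (n choose k) * c^(n-k) * f (Suc k))
        + (\<Sum>k\<le>n. of_nat (n choose Suc k) * c^(n-k) * f (Suc k))"
    by (subst sum.atMost_Suc_shift) (simp add: sum.distrib algebra_simps)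
  have S: "(\<Sum>k\<le>Suc n. of_nat (n choose k) * c^(Suc n-k) * f k)
     = c^(Suc n) * f 0 + (\<Sum>k\<le>n. of_nat (n choose Suc k) * c^(n-k) * f (Suc k))"
    by (subst sum.atMost_Suc_shift) simp
  have T: "(\<Sum>k\<le>Suc n. of_nat (n choose k) * c^(Suc n-k) * f k)
     = (\<Sum>k\<le>n. of_nat (n choose k) * c^(Suc n-k) * f k)"
    by simp
  have U: "c * (\<Sum>k\<le>n. of_nat (n choose k) * c^(n-k) * f k) = (\<Sum>k\<le>n. of_nat (n choose k) * c^(Suc n-k) * f k)"
    unfolding sum_distrib_left by (intro sum.cong) (auto simp: Suc_diff_le)
  show ?thesis using R S T U by linarith
qed

lemma good_sum: "good N (\<lambda>i j. \<Sum>k\<in>S. f k * M k i j)" if "\<And>k. good N (M k)"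
  using that by (auto simp: good_def)

lemma mpow_binom:
  assumes g: "good N B"
  shows "mpow N (\<lambda>i j. B i j + c * mid N i j) n = (\<lambda>i j. \<Sum>k\<le>n. (of_nat (n choose k) * c^(n-k)) * mpow N B k i j)"
proof (induction n)
  case 0
  then show ?case by simp
next
  case (Suc n)
  let ?S = "\<lambda>i j. \<Sum>k\<le>n. (of_nat (n choose k) * c^(n-k)) * mpow N B k i j"
  have gS: "good N ?S" by (rule good_sum) (rule good_mpow[OF g])
  have "mpow N (\<lambda>i j. B i j + c * mid N i j) (Suc n) = mmult N (\<lambda>i j. B i j + c * mid N i j) ?S"
    using Suc by simp
  also have "\<dots> = (\<lambda>i j. mmult N B ?S i j + c * ?S i j)"
    unfolding mmult_add_left mmult_scale_left mmult_mid_left[OF gS] ..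
  also have "\<dots> = (\<lambda>i j. (\<Sum>k\<le>n. (of_nat (n choose k) * c^(n-k)) * mpow N B (Suc k) i j) + c * ?S i j)"
    unfolding mmult_sum_right by simp
  also have "\<dots> = (\<lambda>i j. \<Sum>k\<le>Suc n. (of_nat (Suc n choose k) * c^(Suc n-k)) * mpow N B k i j)"
    by (intro ext) (rule binom_step[where f="\<lambda>k. mpow N B k _ _"])
  finally show ?case .
qed

lemma mpow_bound:
  assumes g: "good N A"
  shows "\<exists>C. \<forall>k i j. \<bar>mpow N A k i j\<bar> \<le> C ^ k"
proof -
  define M where "M = (\<Sum>a<N. \<Sum>b<N. \<bar>A a b\<bar>)"
  have M0: "M \<ge> 0" unfolding M_def by (intro sum_nonneg) auto
  have AM: "\<bar>A i l\<bar> \<le> M" for i l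
  proof (cases "i < N \<and> l < N")
    case True
    have "\<bar>A i l\<bar> \<le> (\<Sum>b<N. \<bar>A i b\<bar>)"
      using True by (intro member_le_sum) auto
    also have "\<dots> \<le> M" unfolding M_def
      using True by (intro member_le_sum[where f="\<lambda>a. \<Sum>b<N. \<bar>A a b\<bar>"]) (auto intro: sum_nonneg)
    finally show ?thesis .
  next
    case False then show ?thesis using g M0 by (auto simp: good_def)
  qed
  define C where "C = real N * M + 1"
  have C1: "C \<ge> 1" unfolding C_def using M0 by simp
  have "\<bar>mpow N A k i j\<bar> \<le> C ^ k" for k i j
  proof (induction k arbitrary: i j)
    case 0 then show ?case by (simp add: mid_def)
  next
    case (Suc k)
    have "\<bar>mpow N A (Suc k) i j\<bar> \<le> (\<Sum>l<N. \<bar>A i l\<bar> * \<bar>mpow N A k l j\<bar>)"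
      unfolding mpow.simps mmult_def by (rule order_trans[OF sum_abs]) (simp add: abs_mult)
    also have "\<dots> \<le> (\<Sum>l<N. M * C ^ k)"
      by (intro sum_mono mult_mono AM Suc) (auto simp: M0)
    also have "\<dots> = real N * M * C ^ k" by simp
    also have "\<dots> \<le> C * C ^ k"
      using C1 by (intro mult_right_mono) (auto simp: C_def)
    finally show ?case by simp
  qed
  then show ?thesis by blast
qed

lemma mexp_summable:
  assumes g: "good N A"
  shows "summable (\<lambda>k. norm (mpow N A k i j / fact k))"
proof -
  obtain C where C: "\<And>k i j. \<bar>mpow N A k i j\<bar> \<le> C ^ k" using mpow_bound[OF g] by blast
  have s: "summable (\<lambda>k. inverse (fact k) * C ^ k)" by (rule summable_exp)
  show ?thesis
  proof (rule summable_comparison_test[OF _ s], intro exI[of _ 0] allI impI)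
    fix n :: nat
    have "norm (norm (mpow N A n i j / fact n)) = inverse (fact n) * \<bar>mpow N A n i j\<bar>"
      by (simp add: abs_mult divide_inverse)
    also have "\<dots> \<le> inverse (fact n) * C ^ n" by (rule mult_left_mono[OF C]) simp
    finally show "norm (norm (mpow N A n i j / fact n)) \<le> inverse (fact n) * C ^ n" .
  qed
qed

lemma mexp_sums:
  assumes g: "good N A"
  shows "(\<lambda>k. mpow N A k i j / fact k) sums mexp N A i j"
  unfolding mexp_def
  by (rule summable_sums) (rule summable_norm_cancel[OF mexp_summable[OF g]])

lemma exp_sums_real: "(\<lambda>k. (c::real) ^ k / fact k) sums exp c"
  using exp_converges[of c] by (simp add: divide_inverse scaleR_conv_of_real mult.commute)

lemma mexp_shift:
  assumes g: "good N B"
  shows "mexp N (\<lambda>i j. B i j + c * mid N i j) i j = exp c * mexp N B i j"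
proof -
  let ?a = "\<lambda>k. mpow N B k i j / fact k"
  let ?b = "\<lambda>k. c ^ k / fact k"
  have sa: "summable (\<lambda>k. norm (?a k))" by (rule mexp_summable[OF g])
  have sb: "summable (\<lambda>k. norm (?b k))"
    using summable_norm_exp[of c] by (simp add: divide_inverse scaleR_conv_of_real mult.commute)
  have CP: "(\<lambda>n. \<Sum>k\<le>n. ?a k * ?b (n - k)) sums ((\<Sum>k. ?a k) * (\<Sum>k. ?b k))"
    by (rule Cauchy_product_sums[OF sa sb])
  have "(\<Sum>k. ?a k) = mexp N B i j" unfolding mexp_def ..
  moreover have "(\<Sum>k. ?b k) = exp c" using exp_sums_real sums_unique by metis
  moreover have "(\<lambda>n. \<Sum>k\<le>n. ?a k * ?b (n - k)) = (\<lambda>n. mpow N (\<lambda>i j. B i j + c * mid N i j) n i j / fact n)"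
  proof
    fix n
    have "mpow N (\<lambda>i j. B i j + c * mid N i j) n i j / fact n
        = (\<Sum>k\<le>n. (of_nat (n choose k) * c^(n-k)) * mpow N B k i j / fact n)"
      unfolding mpow_binom[OF g] sum_divide_distrib ..
    also have "\<dots> = (\<Sum>k\<le>n. ?a k * ?b (n - k))"
    proof (intro sum.cong refl)
      fix k assume "k \<in> {..n}"
      then have kn: "k \<le> n" by simp
      show "(of_nat (n choose k) * c^(n-k)) * mpow N B k i j / fact n = ?a k * ?b (n - k)"
        unfolding binomial_fact[OF kn] by (simp add: field_simps)
    qed
    finally show "(\<Sum>k\<le>n. ?a k * ?b (n - k)) = mpow N (\<lambda>i j. B i j + c * mid N i j) n i j / fact n" by simp
  qed
  ultimately have "(\<lambda>n. mpow N (\<lambda>i j. B i j + c * mid N i j) n i j / fact n) sums (mexp N B i j * exp c)"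
    using CP by simp
  then have "mexp N (\<lambda>i j. B i j + c * mid N i j) i j = mexp N B i j * exp c"
    unfolding mexp_def[of N "\<lambda>i j. B i j + c * mid N i j"] by (rule sums_unique[symmetric])
  then show ?thesis by (simp add: mult.commute)
qed


lemma good_Tflat: "good N (Tflat N)" by (simp add: good_def Tflat_eq)

lemma Tflat_sq: "mmult N (Tflat N) (Tflat N) = Tflat N"
  by (intro ext) (auto simp: mmult_def Tflat_eq)

lemma mult_P_right:
  assumes g: "good N A" and r: "\<And>i. i < N \<Longrightarrow> (\<Sum>l<N. A i l) = 0"
  shows "mmult N A (Tflat N) i j = 0"
proof (cases "i < N \<and> j < N")
  case True
  have "mmult N A (Tflat N) i j = (\<Sum>l<N. A i l) / real N"
    unfolding mmult_def Tflat_eq using True by (simp add: sum_divide_distrib)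
  then show ?thesis using r True by simp
next
  case False
  then show ?thesis using g by (auto simp: mmult_def Tflat_eq good_def)
qed

lemma mult_P_left:
  assumes g: "good N A" and r: "\<And>j. j < N \<Longrightarrow> (\<Sum>l<N. A l j) = 0"
  shows "mmult N (Tflat N) A i j = 0"
proof (cases "i < N \<and> j < N")
  case True
  have "mmult N (Tflat N) A i j = (\<Sum>l<N. A l j) / real N"
    unfolding mmult_def Tflat_eq using True by (simp add: sum_divide_distrib)
  then show ?thesis using r True by simp
next
  case False
  then show ?thesis using g by (auto simp: mmult_def Tflat_eq good_def)
qed

lemma mpow_proj:
  assumes g: "good N A" and AP: "\<And>i j. mmult N A (Tflat N) i j = 0"
    and PA: "\<And>i j. mmult N (Tflat N) A i j = 0"
  shows "mpow N (\<lambda>i j. A i j + d * Tflat N i j) (Suc n) = (\<lambda>i j. mpow N A (Suc n) i j + d ^ Suc n * Tflat N i j)"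
proof (induction n)
  case 0
  have gB: "good N (\<lambda>i j. A i j + d * Tflat N i j)" using g good_Tflat by (auto simp: good_def)
  show ?case using mmult_mid_right[OF gB] mmult_mid_right[OF g] by simp
next
  case (Suc n)
  have PAn: "mmult N (Tflat N) (mpow N A (Suc n)) = (\<lambda>i j. 0)"
  proof -
    have "mmult N (Tflat N) (mpow N A (Suc n)) = mmult N (mmult N (Tflat N) A) (mpow N A n)"
      by (simp add: mmult_assoc)
    also have "mmult N (Tflat N) A = (\<lambda>i j. 0)" using PA by (intro ext) simp
    finally show ?thesis by (simp add: mmult_def)
  qed
  have AP': "mmult N A (Tflat N) = (\<lambda>i j. 0)" using AP by (intro ext) simp
  show ?case
    apply (subst mpow.simps)
    apply (subst Suc)
    apply (simp only: mmult_add_left mmult_add_right mmult_scale_left mmult_scale_right PAn AP' Tflat_sq)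
    apply (simp add: algebra_simps)
    done
qed

lemma mexp_proj:
  assumes g: "good N A" and AP: "\<And>i j. mmult N A (Tflat N) i j = 0"
    and PA: "\<And>i j. mmult N (Tflat N) A i j = 0"
  shows "mexp N (\<lambda>i j. A i j + d * Tflat N i j) i j = mexp N A i j + (exp d - 1) * Tflat N i j"
proof -
  have s1: "(\<lambda>k. mpow N A k i j / fact k) sums mexp N A i j" by (rule mexp_sums[OF g])
  have s2: "(\<lambda>k. Tflat N i j * (d ^ k / fact k - (if k = 0 then 1 else 0))) sums (Tflat N i j * (exp d - 1))"
    by (intro sums_mult sums_diff exp_sums_real) (rule sums_single[where i=0 and f="\<lambda>_. 1::real", simplified])
  have "(\<lambda>k. mpow N A k i j / fact k + Tflat N i j * (d ^ k / fact k - (if k = 0 then 1 else 0)))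
     = (\<lambda>k. mpow N (\<lambda>i j. A i j + d * Tflat N i j) k i j / fact k)"
  proof
    fix k show "mpow N A k i j / fact k + Tflat N i j * (d ^ k / fact k - (if k = 0 then 1 else 0))
     = mpow N (\<lambda>i j. A i j + d * Tflat N i j) k i j / fact k"
    proof (cases k)
      case 0 then show ?thesis by simp
    next
      case (Suc n)
      have "Suc n \<noteq> 0" by simp
      then show ?thesis unfolding Suc mpow_proj[OF g AP PA]
        by (simp only: if_False add_divide_distrib diff_0_right times_divide_eq_right mult.commute[of "Tflat N i j"])
    qed
  qed
  then have "(\<lambda>k. mpow N (\<lambda>i j. A i j + d * Tflat N i j) k i j / fact k) sums (mexp N A i j + Tflat N i j * (exp d - 1))"
    using sums_add[OF s1 s2] by simp
  then have "mexp N (\<lambda>i j. A i j + d * Tflat N i j) i j = mexp N A i j + Tflat N i j * (exp d - 1)"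
    unfolding mexp_def[of N "\<lambda>i j. A i j + d * Tflat N i j"] by (rule sums_unique[symmetric])
  then show ?thesis by (simp add: mult.commute)
qed


theorem corollary3:
  fixes N :: nat and T :: rmat and m :: real
  assumes "N \<ge> 1" and "T \<in> AC N" and "0 < m" and "m \<le> 1"
  shows "(\<lambda>i j. m * T i j + (1 - m) * Tflat N i j) \<in> AC N"
proof -
  have N0: "N > 0" using assms(1) by simp
  obtain t where t: "\<forall>k\<in>{1..N-1}. t k \<ge> 0"
    and T: "T = mexp N (\<lambda>i j. \<Sum>k\<in>{1..N-1}. t k * Kgen N k i j)"
    using assms(2) unfolding AC_def by blast
  define A where "A = (\<lambda>i j. \<Sum>k\<in>{1..N-1}. t k * Kgen N k i j)"
  have gA: "good N A" unfolding A_def by (rule good_sum) (rule good_Kgen)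
  have kN: "\<And>k. k \<in> {1..N-1} \<Longrightarrow> k < N" using N0 by auto
  have rowA: "(\<Sum>l<N. A i l) = 0" if "i < N" for i
  proof -
    have "(\<Sum>l<N. A i l) = (\<Sum>k\<in>{1..N-1}. t k * (\<Sum>l<N. Kgen N k i l))"
      unfolding A_def sum_distrib_left by (rule sum.swap)
    also have "\<dots> = 0" using Kgen_rowsum[OF kN that] by simp
    finally show ?thesis .
  qed
  have colA: "(\<Sum>l<N. A l j) = 0" if "j < N" for j
  proof -
    have "(\<Sum>l<N. A l j) = (\<Sum>k\<in>{1..N-1}. t k * (\<Sum>l<N. Kgen N k l j))"
      unfolding A_def sum_distrib_left by (rule sum.swap)
    also have "\<dots> = 0" using Kgen_colsum[OF kN that] by simp
    finally show ?thesis .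
  qed
  have AP: "\<And>i j. mmult N A (Tflat N) i j = 0" by (rule mult_P_right[OF gA rowA])
  have PA: "\<And>i j. mmult N (Tflat N) A i j = 0" by (rule mult_P_left[OF gA colA])
  define d where "d = - ln m"
  have d0: "d \<ge> 0" unfolding d_def using assms(3,4) by simp
  have ed: "exp (- d) = m" unfolding d_def using assms(3) by simp
  define s where "s = d / real N"
  have s0: "s \<ge> 0" unfolding s_def using d0 by simp
  define t' where "t' = (\<lambda>k. t k + s)"
  have t'0: "\<forall>k\<in>{1..N-1}. t' k \<ge> 0" unfolding t'_def using t s0 by auto
  have sumX: "(\<Sum>k\<in>{1..N-1}. mpow N (shiftX N) k i j) = real N * Tflat N i j - mid N i j" for i j
  proof -
    have U: "{..<N} = insert 0 {1..N-1}" using N0 by auto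
    have "(\<Sum>k<N. mpow N (shiftX N) k i j) = mid N i j + (\<Sum>k\<in>{1..N-1}. mpow N (shiftX N) k i j)"
      unfolding U by (subst sum.insert) auto
    moreover have "Tflat N i j = (1 / real N) * (\<Sum>k<N. mpow N (shiftX N) k i j)" by (simp add: Tflat_def)
    ultimately show ?thesis using N0 by simp
  qed
  have sumK: "(\<Sum>k\<in>{1..N-1}. Kgen N k i j) = real N * Tflat N i j - real N * mid N i j" for i j
  proof -
    have "(\<Sum>k\<in>{1..N-1}. Kgen N k i j) = (\<Sum>k\<in>{1..N-1}. mpow N (shiftX N) k i j) - real (N - 1) * mid N i j"
      unfolding Kgen_def sum_subtractf by simp
    also have "\<dots> = real N * Tflat N i j - real N * mid N i j"
      unfolding sumX using N0 by (simp add: of_nat_diff algebra_simps)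
    finally show ?thesis .
  qed
  define B where "B = (\<lambda>i j. A i j + d * Tflat N i j)"
  have gB: "good N B" unfolding B_def using gA good_Tflat by (auto simp: good_def)
  have A'eq: "(\<lambda>i j. \<Sum>k\<in>{1..N-1}. t' k * Kgen N k i j) = (\<lambda>i j. B i j + (- d) * mid N i j)"
  proof (intro ext)
    fix i j
    have "(\<Sum>k\<in>{1..N-1}. t' k * Kgen N k i j) = A i j + s * (\<Sum>k\<in>{1..N-1}. Kgen N k i j)"
      unfolding t'_def A_def by (simp add: algebra_simps sum.distrib sum_distrib_left)
    also have "\<dots> = B i j + (- d) * mid N i j"
      unfolding sumK B_def s_def using N0 by (simp add: algebra_simps)
    finally show "(\<Sum>k\<in>{1..N-1}. t' k * Kgen N k i j) = B i j + (- d) * mid N i j" .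
  qed
  have "mexp N (\<lambda>i j. \<Sum>k\<in>{1..N-1}. t' k * Kgen N k i j) = (\<lambda>i j. m * T i j + (1 - m) * Tflat N i j)"
  proof (intro ext)
    fix i j
    have "mexp N (\<lambda>i j. \<Sum>k\<in>{1..N-1}. t' k * Kgen N k i j) i j = exp (- d) * mexp N B i j"
      unfolding A'eq by (rule mexp_shift[OF gB])
    also have "mexp N B i j = T i j + (exp d - 1) * Tflat N i j"
      unfolding B_def T A_def[symmetric] by (rule mexp_proj[OF gA AP PA])
    also have "exp (- d) * (T i j + (exp d - 1) * Tflat N i j) = m * T i j + (1 - m) * Tflat N i j"
    proof -
      have me: "m * exp d = 1" using ed by (simp add: exp_minus field_simps)
      have "exp (- d) * (T i j + (exp d - 1) * Tflat N i j) = m * T i j + (m * exp d - m) * Tflat N i j"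
        unfolding ed by (simp add: algebra_simps)
      then show ?thesis unfolding me .
    qed
    finally show "mexp N (\<lambda>i j. \<Sum>k\<in>{1..N-1}. t' k * Kgen N k i j) i j = m * T i j + (1 - m) * Tflat N i j" .
  qed
  then show ?thesis unfolding AC_def mem_Collect_eq using t'0 by (intro exI[of _ t']) simp
qed

end
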